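(* Let $y,l,u\in\mathcal{R}(\mathbb{R}^{+},\mathbb{R})$ be such that $l\leq u$, $l_0\leq y_0\leq u_0$, and $\inf_{s\leq t}(u_s-l_s)>0$ for every $t\geq 0$. Then the reflection problem $RP^u_l(y)$ has at most one solution: if $(x,k)$ and $(\tilde{x},\tilde{k})$ are solutions of $RP^u_l(y)$, then $x=\tilde{x}$ and $k=\tilde{k}$.
   Context: A function $f:\mathbb{R}^+=[0,\infty)\to\mathbb{R}$ is regulated if it has a left limit $f_{t^-}$ at every $t>0$ and a right limit $f_{t^+}$ at every $t\geq0$; $\mathcal{R}(\mathbb{R}^{+},\mathbb{R})$ is the set of regulated functions. Write $\Delta^+f_t=f_{t^+}-f_t$, $\Delta^-f_t=f_t-f_{t^-}$, $a\wedge b=\min(a,b)$, $a\vee b=\max(a,b)$. A regulated function $\phi$ of bounded variation (on every $[0,t]$) decomposes as $\phi_t=\phi^c_t+\sum_{0<s\leq t}\Delta^-\phi_s+\sum_{0\leq s<t}\Delta^+\phi_s$ with $\phi^c$ continuous; its right-continuous part is $\phi^r_t=\phi^c_t+\sum_{0<s\leq t}\Delta^-\phi_s$. Reflection problem $RP^u_l(y)$: for $y,l,u\in\mathcal{R}(\mathbb{R}^{+},\mathbb{R})$ with $l_0\leq y_0\leq u_0$, a pair $(x,k)$ of regulated functions is a solution if there exist $\phi^1,\phi^2$ such that: (i) $x=y+k=y+\phi^1-\phi^2$; (ii) $l\leq x\leq u$; (iii) $\phi^1,\phi^2$ are non-decreasing with $\phi^1_0=\phi^2_0=0$; (iv) $\int_{[0,\infty[}\big((x_s-l_s)\wedge(x_{s^+}-l_{s^+})\big)\,d\phi^{1,r}_s=\int_{[0,\infty[}\big((u_s-x_s)\wedge(u_{s^+}-x_{s^+})\big)\,d\phi^{2,r}_s=0$;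 (v) for every $t\geq0$, $\sum_{s\leq t}(x_{s^+}-l_{s^+})\Delta^+\phi^1_s=\sum_{s\leq t}(u_s-x_s)\Delta^+\phi^1_s=0$ and $\sum_{s\leq t}(u_{s^+}-x_{s^+})\Delta^+\phi^2_s=\sum_{s\leq t}(x_s-l_s)\Delta^+\phi^2_s=0$. Here $\phi^{i,r}$ is the right-continuous part of $\phi^i$. *)

theory Defs
  imports "HOL-Analysis.Analysis"
begin

text \<open>Functions on R+ = [0,infinity) are represented as functions real => real;
  only their values on {0..} matter.\<close>

definition regulated :: "(real \<Rightarrow> real) \<Rightarrow> bool" where
  "regulated f \<longleftrightarrow>
     (\<forall>t>0. \<exists>L. (f \<longlongrightarrow> L) (at_left t)) \<and> (\<forall>t\<ge>0. \<exists>L. (f \<longlongrightarrow> L) (at_right t))"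

definition rlim :: "(real \<Rightarrow> real) \<Rightarrow> real \<Rightarrow> real" where
  "rlim f t = Lim (at_right t) f"

definition rjump :: "(real \<Rightarrow> real) \<Rightarrow> real \<Rightarrow> real" where
  "rjump f t = rlim f t - f t"

text \<open>Right-continuous part phi^r = phi^c + sum of left jumps
  = phi - sum_{0 <= s < t} Delta^+ phi_s, extended by 0 to negative times.\<close>
definition rc_part :: "(real \<Rightarrow> real) \<Rightarrow> real \<Rightarrow> real" where
  "rc_part \<phi> t = (if t < 0 then 0 else \<phi> t - (\<Sum>\<^sub>\<infinity>s\<in>{0..<t}. rjump \<phi> s))"

definition LS_int :: "(real \<Rightarrow> real) \<Rightarrow> (real \<Rightarrow> real) \<Rightarrow> ennreal" where
  "LS_int g \<phi> = (\<integral>\<^sup>+ s. ennreal (g s) * indicator {0..} s \<partial>interval_measure (rc_part \<phi>))"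

definition RP_solution ::
  "(real \<Rightarrow> real) \<Rightarrow> (real \<Rightarrow> real) \<Rightarrow> (real \<Rightarrow> real) \<Rightarrow> (real \<Rightarrow> real) \<Rightarrow> (real \<Rightarrow> real) \<Rightarrow> bool"
  where
  "RP_solution y l u x k \<longleftrightarrow>
     regulated x \<and> regulated k \<and>
     (\<exists>\<phi>1 \<phi>2.
        \<comment> \<open>(i)\<close>
        (\<forall>t\<ge>0. x t = y t + k t \<and> k t = \<phi>1 t - \<phi>2 t) \<and>
        \<comment> \<open>(ii)\<close>
        (\<forall>t\<ge>0. l t \<le> x t \<and> x t \<le> u t) \<and>
        \<comment> \<open>(iii)\<close>
        mono_on {0..} \<phi>1 \<and> mono_on {0..} \<phi>2 \<and> \<phi>1 0 = 0 \<and> \<phi>2 0 = 0 \<and>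
        \<comment> \<open>(iv)\<close>
        LS_int (\<lambda>s. min (x s - l s) (rlim x s - rlim l s)) \<phi>1 = 0 \<and>
        LS_int (\<lambda>s. min (u s - x s) (rlim u s - rlim x s)) \<phi>2 = 0 \<and>
        \<comment> \<open>(v)\<close>
        (\<forall>t\<ge>0.
           ((\<lambda>s. (rlim x s - rlim l s) * rjump \<phi>1 s) has_sum 0) {0..t} \<and>
           ((\<lambda>s. (u s - x s) * rjump \<phi>1 s) has_sum 0) {0..t} \<and>
           ((\<lambda>s. (rlim u s - rlim x s) * rjump \<phi>2 s) has_sum 0) {0..t} \<and>
           ((\<lambda>s. (x s - l s) * rjump \<phi>2 s) has_sum 0) {0..t}))"

end

theory Submission
  imports Defs
begin

lemma rlim_mono:
  assumes m: "mono_on {0..} \<phi>" and t: "t \<ge> 0"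
  shows "(\<phi> \<longlongrightarrow> rlim \<phi> t) (at_right t)" "\<phi> t \<le> rlim \<phi> t" "\<And>s. s > t \<Longrightarrow> rlim \<phi> t \<le> \<phi> s"
proof -
  have L: "(\<phi> \<longlongrightarrow> Inf (\<phi> ` ({t<..} \<inter> UNIV))) (at t within ({t<..} \<inter> UNIV))"
    by (rule Lim_right_bound[where K="\<phi> t"]) (use t in \<open>auto intro: mono_onD[OF m]\<close>)
  hence L': "(\<phi> \<longlongrightarrow> Inf (\<phi> ` {t<..})) (at_right t)" by simp
  hence eq: "rlim \<phi> t = Inf (\<phi> ` {t<..})"
    unfolding rlim_def by (intro tendsto_Lim) auto
  show "(\<phi> \<longlongrightarrow> rlim \<phi> t) (at_right t)" using L' eq by simp
  show "\<phi> t \<le> rlim \<phi> t" unfolding eq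
    by (rule cInf_greatest) (use t in \<open>auto intro: mono_onD[OF m] simp: gt_ex\<close>)
  show "rlim \<phi> t \<le> \<phi> s" if "s > t" for s unfolding eq
    by (rule cInf_lower) (use that t in \<open>auto intro!: exI[of _ "\<phi> t"] mono_onD[OF m] simp: bdd_below_def\<close>)
qed

lemma rjump_nonneg: "mono_on {0..} \<phi> \<Longrightarrow> t \<ge> 0 \<Longrightarrow> rjump \<phi> t \<ge> 0"
  using rlim_mono(2)[of \<phi> t] by (simp add: rjump_def)

lemma finite_jumps_le:
  assumes m: "mono_on {0..} \<phi>" and a: "0 \<le> a"
  shows "finite F \<Longrightarrow> F \<subseteq> {a..<b} \<Longrightarrow> a \<le> b \<Longrightarrow> sum (rjump \<phi>) F \<le> \<phi> b - \<phi> a"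
proof (induction F arbitrary: b rule: finite_linorder_max_induct)
  case empty
  then show ?case using mono_onD[OF m, of a b] a by simp
next
  case (insert c A)
  have "sum (rjump \<phi>) A \<le> \<phi> c - \<phi> a"
    using insert by (intro insert.IH) auto
  moreover have "rjump \<phi> c \<le> \<phi> b - \<phi> c"
    using insert a rlim_mono(3)[OF m, of c b] by (auto simp: rjump_def)
  moreover have "c \<notin> A" using insert by auto
  ultimately show ?case using insert by simp
qed

lemma jumps_summable:
  assumes m: "mono_on {0..} \<phi>" and a: "0 \<le> a" "a \<le> b"
  shows "rjump \<phi> summable_on {a..<b}" "infsum (rjump \<phi>) {a..<b} \<le> \<phi> b - \<phi> a"
proof -
  show S: "rjump \<phi> summable_on {a..<b}"
    by (rule nonneg_bdd_above_summable_on)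
       (use a rjump_nonneg[OF m] finite_jumps_le[OF m a(1) _ _ a(2)] in \<open>auto intro!: bdd_aboveI[of _ "\<phi> b - \<phi> a"]\<close>)
  show "infsum (rjump \<phi>) {a..<b} \<le> \<phi> b - \<phi> a"
    by (rule infsum_le_finite_sums[OF S]) (use finite_jumps_le[OF m a(1) _ _ a(2)] in auto)
qed

lemma jumps_summable_sub:
  assumes m: "mono_on {0..} \<phi>" and a: "0 \<le> a" "a \<le> b" "A \<subseteq> {a..<b}"
  shows "rjump \<phi> summable_on A"
  using summable_on_subset[OF jumps_summable(1)[OF m a(1,2)] a(3)] .

lemma J_split:
  assumes m: "mono_on {0..} \<phi>" and a: "0 \<le> a" "a \<le> b"
  shows "infsum (rjump \<phi>) {0..<b} = infsum (rjump \<phi>) {0..<a} + infsum (rjump \<phi>) {a..<b}"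
proof -
  have "{0..<b} = {0..<a} \<union> {a..<b}" using a by auto
  thus ?thesis
    by (simp add: infsum_Un_disjoint jumps_summable(1)[OF m] a)
qed

lemma J_insert:
  assumes m: "mono_on {0..} \<phi>" and a: "0 \<le> t" "t < r"
  shows "infsum (rjump \<phi>) {t..<r} = rjump \<phi> t + infsum (rjump \<phi>) {t<..<r}"
proof -
  have S: "rjump \<phi> summable_on {t<..<r}" by (rule jumps_summable_sub[OF m, of t r]) (use a in auto)
  have "{t..<r} = insert t {t<..<r}" using a by auto
  thus ?thesis using infsum_insert[OF S, of t] by simp
qed

lemma J_open_bound:
  assumes m: "mono_on {0..} \<phi>" and a: "0 \<le> t" "t < r"
  shows "infsum (rjump \<phi>) {t<..<r} \<le> \<phi> r - rlim \<phi> t"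
proof (rule infsum_le_finite_sums)
  show "rjump \<phi> summable_on {t<..<r}" by (rule jumps_summable_sub[OF m, of t r]) (use a in auto)
  fix G assume G: "finite G" "G \<subseteq> {t<..<r}"
  show "sum (rjump \<phi>) G \<le> \<phi> r - rlim \<phi> t"
  proof (cases "G = {}")
    case True then show ?thesis using rlim_mono(3)[OF m a(1) a(2)] by simp
  next
    case False
    define t' where "t' = Min G"
    have t': "t' \<in> G" using G False by (simp add: t'_def)
    have "sum (rjump \<phi>) G \<le> \<phi> r - \<phi> t'"
      by (rule finite_jumps_le[OF m]) (use G t' a in \<open>auto simp: t'_def\<close>)
    moreover have "rlim \<phi> t \<le> \<phi> t'" using rlim_mono(3)[OF m a(1)] t' G by auto
    ultimately show ?thesis by simp
  qed
qed

lemma F_diff: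
  assumes m: "mono_on {0..} \<phi>" and a: "0 \<le> a" "a \<le> b"
  shows "\<phi> b - \<phi> a = (rc_part \<phi> b - rc_part \<phi> a) + infsum (rjump \<phi>) {a..<b}"
  using J_split[OF m a] a by (simp add: rc_part_def)

lemma F_mono:
  assumes m: "mono_on {0..} \<phi>" and z: "\<phi> 0 = 0" and xy: "x \<le> y"
  shows "rc_part \<phi> x \<le> rc_part \<phi> y"
proof -
  have *: "rc_part \<phi> a \<le> rc_part \<phi> b" if "0 \<le> a" "a \<le> b" for a b
    using F_diff[OF m that] jumps_summable(2)[OF m that] by simp
  show ?thesis
  proof (cases "x < 0")
    case True
    then show ?thesis using *[of 0 y] z by (cases "y < 0") (auto simp: rc_part_def)
  next
    case False
    then show ?thesis using *[of x y] xy by auto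
  qed
qed

lemma F_rcont:
  assumes m: "mono_on {0..} \<phi>" and z: "\<phi> 0 = 0"
  shows "continuous (at_right a) (rc_part \<phi>)"
proof (cases "a < 0")
  case True
  have "\<forall>\<^sub>F r in at_right a. rc_part \<phi> r = rc_part \<phi> a"
    unfolding eventually_at_right_field using True
    by (intro exI[of _ 0]) (auto simp: rc_part_def)
  then show ?thesis unfolding continuous_within
    by (rule tendsto_eventually)
next
  case False
  hence a: "0 \<le> a" by simp
  have ev: "\<forall>\<^sub>F r in at_right a. rc_part \<phi> a \<le> rc_part \<phi> r \<and> rc_part \<phi> r \<le> rc_part \<phi> a + (\<phi> r - rlim \<phi> a)"
    unfolding eventually_at_right_field
  proof (intro exI[of _ "a+1"] conjI allI impI)
    fix r assume r: "a < r" "r < a + 1"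
    have "\<phi> r - \<phi> a = (rc_part \<phi> r - rc_part \<phi> a) + (rjump \<phi> a + infsum (rjump \<phi>) {a<..<r})"
      using F_diff[OF m a, of r] J_insert[OF m a r(1)] r by simp
    moreover have "infsum (rjump \<phi>) {a<..<r} \<le> \<phi> r - rlim \<phi> a" by (rule J_open_bound[OF m a r(1)])
    moreover have "infsum (rjump \<phi>) {a<..<r} \<ge> 0"
      by (rule infsum_nonneg) (use rjump_nonneg[OF m] a in auto)
    ultimately show "rc_part \<phi> a \<le> rc_part \<phi> r" "rc_part \<phi> r \<le> rc_part \<phi> a + (\<phi> r - rlim \<phi> a)"
      by (auto simp: rjump_def)
  qed simp
  have "((\<lambda>r. rc_part \<phi> a + (\<phi> r - rlim \<phi> a)) \<longlongrightarrow> rc_part \<phi> a + (rlim \<phi> a - rlim \<phi> a)) (at_right a)"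
    by (intro tendsto_intros rlim_mono(1)[OF m a])
  hence lim: "((\<lambda>r. rc_part \<phi> a + (\<phi> r - rlim \<phi> a)) \<longlongrightarrow> rc_part \<phi> a) (at_right a)" by simp
  have lo: "\<forall>\<^sub>F r in at_right a. rc_part \<phi> a \<le> rc_part \<phi> r" using ev by (rule eventually_mono) simp
  have hi: "\<forall>\<^sub>F r in at_right a. rc_part \<phi> r \<le> rc_part \<phi> a + (\<phi> r - rlim \<phi> a)" using ev by (rule eventually_mono) simp
  show ?thesis unfolding continuous_within
    by (rule tendsto_sandwich[OF lo hi tendsto_const lim])
qed

lemma mu_Ioc:
  assumes m: "mono_on {0..} \<phi>" and z: "\<phi> 0 = 0" and "a \<le> b"
  shows "emeasure (interval_measure (rc_part \<phi>)) {a<..b} = ennreal (rc_part \<phi> b - rc_part \<phi> a)"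
  by (rule emeasure_interval_measure_Ioc[OF assms(3)]) (auto intro: F_mono[OF m z] F_rcont[OF m z])

lemma reg_rlim: "regulated f \<Longrightarrow> t \<ge> 0 \<Longrightarrow> (f \<longlongrightarrow> rlim f t) (at_right t)"
  unfolding regulated_def rlim_def
  by (metis tendsto_Lim trivial_limit_at_right_real)

lemma LS_zero_set:
  assumes LS: "LS_int g \<phi> = 0" and A: "A \<in> sets borel" "A \<subseteq> {0..}" and c: "c > 0" "\<forall>r\<in>A. c \<le> g r"
  shows "emeasure (interval_measure (rc_part \<phi>)) A = 0"
proof -
  let ?\<mu> = "interval_measure (rc_part \<phi>)"
  have "(\<integral>\<^sup>+ s. ennreal c * indicator A s \<partial>?\<mu>) \<le> (\<integral>\<^sup>+ s. ennreal (g s) * indicator {0..} s \<partial>?\<mu>)"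
    by (rule nn_integral_mono) (use A c in \<open>auto simp: indicator_def ennreal_leI\<close>)
  also have "\<dots> = 0" using LS by (simp add: LS_int_def)
  finally have "ennreal c * emeasure ?\<mu> A \<le> 0"
    using A by (simp add: nn_integral_cmult_indicator)
  thus ?thesis using c by simp
qed

lemma right_nbhd_pos:
  assumes rx: "regulated x" and rl: "regulated l" and s: "s \<ge> 0"
    and g: "min (x s - l s) (rlim x s - rlim l s) > 0"
  shows "\<exists>\<delta>>0. \<exists>c>0. \<forall>r\<in>{s..<s+\<delta>}. c \<le> min (x r - l r) (rlim x r - rlim l r)"
proof -
  define H where "H = rlim x s - rlim l s"
  have H: "H > 0" using g by (simp add: H_def)
  have lim: "((\<lambda>r. x r - l r) \<longlongrightarrow> H) (at_right s)"
    unfolding H_def by (intro tendsto_intros reg_rlim rx rl s)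
  have "\<forall>\<^sub>F r in at_right s. H/2 < x r - l r"
    by (rule order_tendstoD(1)[OF lim]) (use H in simp)
  then obtain b where b: "b > s" "\<And>r. r > s \<Longrightarrow> r < b \<Longrightarrow> H/2 < x r - l r"
    unfolding eventually_at_right_field by blast
  have hr: "H/2 \<le> rlim x r - rlim l r" if r: "s < r" "r < b" for r
  proof (rule tendsto_lowerbound)
    show "((\<lambda>r. x r - l r) \<longlongrightarrow> rlim x r - rlim l r) (at_right r)"
      using r s by (intro tendsto_intros reg_rlim rx rl) auto
    show "\<forall>\<^sub>F r' in at_right r. H/2 \<le> x r' - l r'"
      unfolding eventually_at_right_field using r b
      by (intro exI[of _ b]) (auto intro: less_imp_le)
  qed simp
  define c where "c = min (min (x s - l s) (rlim x s - rlim l s)) (H/2)"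
  have c: "c > 0" using H g by (simp add: c_def)
  have "\<forall>r\<in>{s..<s+(b-s)}. c \<le> min (x r - l r) (rlim x r - rlim l r)"
  proof
    fix r assume "r \<in> {s..<s + (b - s)}"
    then consider "r = s" | "s < r" "r < b" by fastforce
    then show "c \<le> min (x r - l r) (rlim x r - rlim l r)"
    proof cases
      case 2 then show ?thesis using b(2)[of r] hr[of r] by (auto simp: c_def)
    qed (auto simp: c_def)
  qed
  thus ?thesis using b(1) c by (metis diff_gt_0_iff_gt)
qed

lemma left_cont_F:
  assumes m: "mono_on {0..} \<phi>" and z: "\<phi> 0 = 0"
    and pt: "emeasure (interval_measure (rc_part \<phi>)) {s} = 0" and e: "\<epsilon> > 0"
  shows "\<exists>r<s. rc_part \<phi> s - rc_part \<phi> r < \<epsilon>"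
proof -
  let ?\<mu> = "interval_measure (rc_part \<phi>)"
  define A where "A n = {s - 1/Suc n<..s}" for n :: nat
  have dec: "decseq A" unfolding decseq_def
  proof (intro allI impI)
    fix m n :: nat assume "m \<le> n"
    hence "1 / real (Suc n) \<le> 1 / real (Suc m)" by (simp add: frac_le)
    thus "A n \<subseteq> A m" by (auto simp: A_def)
  qed
  have AI: "(\<Inter>i. A i) = {s}"
  proof (intro equalityI subsetI)
    fix x assume x: "x \<in> (\<Inter>i. A i)"
    hence le: "x \<le> s" and lt: "\<And>n. s - 1 / real (Suc n) < x" by (auto simp: A_def)
    show "x \<in> {s}"
    proof (rule ccontr)
      assume "x \<notin> {s}" hence "s - x > 0" using le by simp
      then obtain n where "1 / real (Suc n) < s - x" by (rule nat_approx_posE)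
      thus False using lt[of n] by linarith
    qed
  next
    fix x assume "x \<in> {s}" thus "x \<in> (\<Inter>i. A i)" by (auto simp: A_def)
  qed
  have "(INF n. emeasure ?\<mu> (A n)) = emeasure ?\<mu> (\<Inter>i. A i)"
    by (rule INF_emeasure_decseq[OF _ dec]) (auto simp: A_def mu_Ioc[OF m z])
  also have "\<dots> = 0" using AI pt by simp
  finally have "(INF n. emeasure ?\<mu> (A n)) < ennreal \<epsilon>" using e by simp
  then obtain n where "emeasure ?\<mu> (A n) < ennreal \<epsilon>" by (auto simp: INF_less_iff)
  hence "ennreal (rc_part \<phi> s - rc_part \<phi> (s - 1/Suc n)) < ennreal \<epsilon>"
    by (simp add: A_def mu_Ioc[OF m z])
  hence "rc_part \<phi> s - rc_part \<phi> (s - 1/Suc n) < \<epsilon>"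
    using F_mono[OF m z, of "s - 1/Suc n" s] by (subst (asm) ennreal_less_iff) auto
  thus ?thesis by (intro exI[of _ "s - 1/Suc n"]) auto
qed

lemma const_on:
  assumes m: "mono_on {0..} \<phi>" and z: "\<phi> 0 = 0" and rx: "regulated x" and rl: "regulated l"
    and LS: "LS_int (\<lambda>s. min (x s - l s) (rlim x s - rlim l s)) \<phi> = 0"
    and a: "0 \<le> a" "a \<le> b" and pos: "\<forall>s\<in>{a..b}. min (x s - l s) (rlim x s - rlim l s) > 0"
  shows "rc_part \<phi> b = rc_part \<phi> a"
proof -
  let ?F = "rc_part \<phi>"
  let ?\<mu> = "interval_measure (rc_part \<phi>)"
  have R: "\<exists>\<delta>>0. \<forall>r\<in>{s..<s+\<delta>}. ?F r = ?F s" and pt: "emeasure ?\<mu> {s} = 0" if s: "s \<in> {a..b}" for s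
  proof -
    obtain \<delta> c where \<delta>: "\<delta>>0" "c>0" "\<forall>r\<in>{s..<s+\<delta>}. c \<le> min (x r - l r) (rlim x r - rlim l r)"
      using right_nbhd_pos[OF rx rl, of s] s pos a by auto
    have Z: "emeasure ?\<mu> {s..<s+\<delta>} = 0" by (rule LS_zero_set[OF LS]) (use s a \<delta> in auto)
    show "emeasure ?\<mu> {s} = 0" using emeasure_mono[of "{s}" "{s..<s+\<delta>}" ?\<mu>] Z \<delta> by simp
    show "\<exists>\<delta>>0. \<forall>r\<in>{s..<s+\<delta>}. ?F r = ?F s"
    proof (intro exI[of _ \<delta>] conjI ballI)
      fix r assume r: "r \<in> {s..<s+\<delta>}"
      have "emeasure ?\<mu> {s<..r} \<le> emeasure ?\<mu> {s..<s+\<delta>}"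
        by (rule emeasure_mono) (use r in auto)
      hence "ennreal (?F r - ?F s) \<le> 0" using Z r mu_Ioc[OF m z, of s r] by simp
      hence "?F r - ?F s \<le> 0" by (auto simp: ennreal_eq_0_iff)
      moreover have "?F s \<le> ?F r" using F_mono[OF m z, of s r] r by simp
      ultimately show "?F r = ?F s" by simp
    qed (use \<delta> in simp)
  qed
  define T where "T = {r \<in> {a..b}. ?F r = ?F a}"
  have aT: "a \<in> T" using a by (simp add: T_def)
  have bT: "bdd_above T" unfolding T_def by (rule bdd_aboveI[of _ b]) auto
  have TT: "T \<noteq> {}" using aT by auto
  define M where "M = Sup T"
  have aM: "a \<le> M" using cSup_upper[OF aT bT] by (simp add: M_def)
  have Mb: "M \<le> b" unfolding M_def by (rule cSup_least[OF TT]) (auto simp: T_def)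
  have FM: "?F M = ?F a"
  proof (cases "M = a")
    case False
    hence aM': "a < M" using aM by simp
    have small: "?F M - ?F a < \<epsilon>" if e: "\<epsilon> > 0" for \<epsilon>
    proof -
      obtain r where r: "r < M" "?F M - ?F r < \<epsilon>"
        using left_cont_F[OF m z pt[of M] e] aM Mb by auto
      have "max r a < Sup T" using r aM' by (simp add: M_def)
      then obtain t where t: "t \<in> T" "max r a < t" using less_cSup_iff[OF TT bT] by blast
      have "?F r \<le> ?F t" using F_mono[OF m z, of r t] t by simp
      thus ?thesis using t r by (simp add: T_def)
    qed
    have "?F a \<le> ?F M" using F_mono[OF m z aM] .
    thus ?thesis using small[of "?F M - ?F a"] by linarith
  qed simp
  have "M = b"
  proof (rule ccontr)
    assume "M \<noteq> b" hence Mb': "M < b" using Mb by simp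
    obtain \<delta> where \<delta>: "\<delta> > 0" "\<forall>r\<in>{M..<M+\<delta>}. ?F r = ?F M" using R[of M] aM Mb by auto
    define r where "r = min (M + \<delta>/2) b"
    have r: "r \<in> {M..<M+\<delta>}" "M < r" "r \<le> b" using \<delta> Mb' by (auto simp: r_def)
    hence "r \<in> T" using \<delta> FM aM by (auto simp: T_def)
    hence "r \<le> M" unfolding M_def by (rule cSup_upper[OF _ bT])
    thus False using r by simp
  qed
  thus ?thesis using FM by simp
qed

lemma hs0:
  fixes f :: "real \<Rightarrow> real"
  assumes nn: "\<And>x. x \<in> A \<Longrightarrow> f x \<ge> 0" and hs: "(f has_sum 0) A" and x: "x \<in> A"
  shows "f x = 0"
proof -
  have S: "f summable_on A" using hs by (auto simp: summable_on_def)
  have "infsum f {x} \<le> infsum f A"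
    by (rule infsum_mono2) (use S x nn in auto)
  also have "\<dots> = 0" using hs by (rule infsumI)
  finally show ?thesis using nn[OF x] by simp
qed

lemma rlim_le:
  assumes "regulated f" "regulated g" "s \<ge> 0" "\<forall>t\<ge>0. f t \<le> g t"
  shows "rlim f s \<le> rlim g s"
proof (rule tendsto_le[OF _ reg_rlim[OF assms(2,3)] reg_rlim[OF assms(1,3)]])
  show "\<forall>\<^sub>F t in at_right s. f t \<le> g t"
    unfolding eventually_at_right_field using assms(3,4)
    by (intro exI[of _ "s+1"]) auto
qed simp

lemma rlim_eq_ev:
  assumes "s \<ge> 0" "(h \<longlongrightarrow> L) (at_right s)" "\<forall>t>s. f t = h t"
  shows "rlim f s = L"
proof -
  have "\<forall>\<^sub>F t in at_right s. h t = f t"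
    unfolding eventually_at_right_field using assms(3)
    by (intro exI[of _ "s+1"]) auto
  hence "(f \<longlongrightarrow> L) (at_right s)" using assms(2) tendsto_cong by blast
  thus ?thesis unfolding rlim_def by (intro tendsto_Lim) auto
qed

lemma sol_facts:
  assumes sol: "RP_solution y l u x k" and ry: "regulated y" and rl: "regulated l" and ru: "regulated u"
  obtains \<phi>1 \<phi>2 where "regulated x" "\<forall>t\<ge>0. x t = y t + \<phi>1 t - \<phi>2 t" "\<forall>t\<ge>0. k t = \<phi>1 t - \<phi>2 t"
    "\<forall>t\<ge>0. l t \<le> x t \<and> x t \<le> u t"
    "mono_on {0..} \<phi>1" "mono_on {0..} \<phi>2" "\<phi>1 0 = 0" "\<phi>2 0 = 0"
    "LS_int (\<lambda>s. min (x s - l s) (rlim x s - rlim l s)) \<phi>1 = 0"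
    "LS_int (\<lambda>s. min (u s - x s) (rlim u s - rlim x s)) \<phi>2 = 0"
    "\<forall>s\<ge>0. rlim l s \<le> rlim x s \<and> rlim x s \<le> rlim u s"
    "\<forall>s\<ge>0. (rlim x s - rlim l s) * rjump \<phi>1 s = 0 \<and> (u s - x s) * rjump \<phi>1 s = 0 \<and>
       (rlim u s - rlim x s) * rjump \<phi>2 s = 0 \<and> (x s - l s) * rjump \<phi>2 s = 0"
    "\<forall>s\<ge>0. rlim x s - x s = (rlim y s - y s) + rjump \<phi>1 s - rjump \<phi>2 s"
proof -
  from sol obtain \<phi>1 \<phi>2 where rx: "regulated x" and
    e: "\<forall>t\<ge>0. x t = y t + k t \<and> k t = \<phi>1 t - \<phi>2 t" and
    b: "\<forall>t\<ge>0. l t \<le> x t \<and> x t \<le> u t" and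
    m1: "mono_on {0..} \<phi>1" and m2: "mono_on {0..} \<phi>2" and z: "\<phi>1 0 = 0" "\<phi>2 0 = 0" and
    L1: "LS_int (\<lambda>s. min (x s - l s) (rlim x s - rlim l s)) \<phi>1 = 0" and
    L2: "LS_int (\<lambda>s. min (u s - x s) (rlim u s - rlim x s)) \<phi>2 = 0" and
    v: "\<forall>t\<ge>0.
           ((\<lambda>s. (rlim x s - rlim l s) * rjump \<phi>1 s) has_sum 0) {0..t} \<and>
           ((\<lambda>s. (u s - x s) * rjump \<phi>1 s) has_sum 0) {0..t} \<and>
           ((\<lambda>s. (rlim u s - rlim x s) * rjump \<phi>2 s) has_sum 0) {0..t} \<and>
           ((\<lambda>s. (x s - l s) * rjump \<phi>2 s) has_sum 0) {0..t}"
    unfolding RP_solution_def by blast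
  have rb: "\<forall>s\<ge>0. rlim l s \<le> rlim x s \<and> rlim x s \<le> rlim u s"
    using rlim_le[OF rl rx] rlim_le[OF rx ru] b by blast
  have nn1: "\<And>s. s \<ge> 0 \<Longrightarrow> rjump \<phi>1 s \<ge> 0" using rjump_nonneg[OF m1] .
  have nn2: "\<And>s. s \<ge> 0 \<Longrightarrow> rjump \<phi>2 s \<ge> 0" using rjump_nonneg[OF m2] .
  have J: "\<forall>s\<ge>0. (rlim x s - rlim l s) * rjump \<phi>1 s = 0 \<and> (u s - x s) * rjump \<phi>1 s = 0 \<and>
       (rlim u s - rlim x s) * rjump \<phi>2 s = 0 \<and> (x s - l s) * rjump \<phi>2 s = 0"
  proof (intro allI impI conjI)
    fix s :: real assume s: "s \<ge> 0"
    have s': "s \<in> {0..s}" using s by simp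
    have bd: "\<And>r. r \<in> {0..s} \<Longrightarrow> r \<ge> 0" by simp
    show "(rlim x s - rlim l s) * rjump \<phi>1 s = 0"
      by (rule hs0[OF _ conjunct1[OF v[rule_format, OF s]] s']) (use rb nn1 in \<open>auto dest: bd\<close>)
    show "(u s - x s) * rjump \<phi>1 s = 0"
      by (rule hs0[OF _ conjunct1[OF conjunct2[OF v[rule_format, OF s]]] s']) (use b nn1 in \<open>auto dest: bd\<close>)
    show "(rlim u s - rlim x s) * rjump \<phi>2 s = 0"
      by (rule hs0[OF _ conjunct1[OF conjunct2[OF conjunct2[OF v[rule_format, OF s]]]] s']) (use rb nn2 in \<open>auto dest: bd\<close>)
    show "(x s - l s) * rjump \<phi>2 s = 0"
      by (rule hs0[OF _ conjunct2[OF conjunct2[OF conjunct2[OF v[rule_format, OF s]]]] s']) (use b nn2 in \<open>auto dest: bd\<close>)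
  qed
  have jr: "\<forall>s\<ge>0. rlim x s - x s = (rlim y s - y s) + rjump \<phi>1 s - rjump \<phi>2 s"
  proof (intro allI impI)
    fix s :: real assume s: "s \<ge> 0"
    have "rlim x s = rlim y s + rlim \<phi>1 s - rlim \<phi>2 s"
      by (rule rlim_eq_ev[OF s, of "\<lambda>t. y t + \<phi>1 t - \<phi>2 t"])
         (use s e in \<open>auto intro!: tendsto_intros reg_rlim[OF ry] rlim_mono(1)[OF m1] rlim_mono(1)[OF m2]\<close>)
    thus "rlim x s - x s = (rlim y s - y s) + rjump \<phi>1 s - rjump \<phi>2 s"
      using e s by (auto simp: rjump_def)
  qed
  show ?thesis
    by (rule that[OF rx _ _ b m1 m2 z L1 L2 rb J jr]) (use e in auto)
qed

lemma phi_left: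
  assumes m: "mono_on {0..} \<phi>" and z: "\<phi> 0 = 0" and s: "s > 0"
    and pt: "emeasure (interval_measure (rc_part \<phi>)) {s} = 0" and e: "\<epsilon> > 0"
  shows "\<exists>r. 0 \<le> r \<and> r < s \<and> (\<forall>r'\<in>{r..<s}. \<phi> s - \<phi> r' < \<epsilon>)"
proof -
  obtain r1 where r1: "r1 < s" "rc_part \<phi> s - rc_part \<phi> r1 < \<epsilon>/2"
    using left_cont_F[OF m z pt, of "\<epsilon>/2"] e by auto
  define L where "L = Sup (\<phi> ` {0..<s})"
  have ne: "\<phi> ` {0..<s} \<noteq> {}" using s by auto
  have bd: "bdd_above (\<phi> ` {0..<s})"
    by (rule bdd_aboveI[of _ "\<phi> s"]) (auto intro: mono_onD[OF m])
  have Lup: "\<phi> r \<le> L" if "r \<in> {0..<s}" for r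
    unfolding L_def using that bd by (auto intro: cSup_upper)
  have "L - \<epsilon>/2 < L" using e by simp
  then obtain r2 where r2: "r2 \<in> {0..<s}" "L - \<epsilon>/2 < \<phi> r2"
    unfolding L_def using less_cSup_iff[OF ne bd] by auto
  have Jb: "infsum (rjump \<phi>) {r'..<s} \<le> L - \<phi> r'" if r': "r' \<in> {0..<s}" for r'
  proof (rule infsum_le_finite_sums)
    show "rjump \<phi> summable_on {r'..<s}" by (rule jumps_summable(1)[OF m]) (use r' in auto)
    fix G assume G: "finite G" "G \<subseteq> {r'..<s}"
    show "sum (rjump \<phi>) G \<le> L - \<phi> r'"
    proof (cases "G = {}")
      case True then show ?thesis using Lup[OF r'] by simp
    next
      case False
      define b where "b = (Max G + s) / 2"
      have "Max G \<in> G" using G False by simp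
      hence b: "Max G < b" "b < s" "r' \<le> b" using G by (auto simp: b_def)
      have Gb: "G \<subseteq> {r'..<b}"
      proof
        fix x assume x: "x \<in> G"
        hence "r' \<le> x" "x \<le> Max G" using G Max_ge by auto
        thus "x \<in> {r'..<b}" using b by auto
      qed
      have "sum (rjump \<phi>) G \<le> \<phi> b - \<phi> r'"
        by (rule finite_jumps_le[OF m _ G(1) Gb b(3)]) (use r' in auto)
      moreover have "\<phi> b \<le> L" using Lup[of b] b r' by auto
      ultimately show ?thesis by simp
    qed
  qed
  show ?thesis
  proof (intro exI[of _ "max r1 r2"] conjI ballI)
    fix r' assume r': "r' \<in> {max r1 r2..<s}"
    have r'0: "0 \<le> r'" "r' \<le> s" using r' r2 by auto
    have "\<phi> s - \<phi> r' = (rc_part \<phi> s - rc_part \<phi> r') + infsum (rjump \<phi>) {r'..<s}"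
      by (rule F_diff[OF m r'0])
    moreover have "rc_part \<phi> r1 \<le> rc_part \<phi> r'" using F_mono[OF m z, of r1 r'] r' by simp
    moreover have "infsum (rjump \<phi>) {r'..<s} \<le> L - \<phi> r'" using Jb r' r2 by auto
    moreover have "\<phi> r2 \<le> \<phi> r'" using mono_onD[OF m, of r2 r'] r' r2 by auto
    ultimately show "\<phi> s - \<phi> r' < \<epsilon>" using r1 r2 by linarith
  qed (use r1 r2 s in auto)
qed

lemma flat:
  assumes m: "mono_on {0..} \<phi>" and a: "0 \<le> a" "a \<le> b"
    and F: "rc_part \<phi> b = rc_part \<phi> a" and j: "\<forall>s\<in>{a..<b}. rjump \<phi> s = 0"
  shows "\<phi> b = \<phi> a"
  using F_diff[OF m a] F infsum_0[of "{a..<b}" "rjump \<phi>"] j by simp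

lemma rc_eq:
  fixes F :: "real \<Rightarrow> real"
  assumes "continuous (at_right a) F" "\<forall>\<^sub>F r in at_right a. F r = c"
  shows "F a = c"
proof -
  have "(F \<longlongrightarrow> F a) (at_right a)" using assms(1) by (simp add: continuous_within)
  moreover have "(F \<longlongrightarrow> c) (at_right a)"
    using assms(2) by (rule tendsto_eventually)
  ultimately show ?thesis using tendsto_unique[of "at_right a" F "F a" c] by simp
qed

lemma one_side:
  assumes ry: "regulated y" and rl: "regulated l" and ru: "regulated u"
    and sol1: "RP_solution y l u x k" and sol2: "RP_solution y l u x' k'" and t0: "t0 \<ge> 0"
  shows "x t0 \<le> x' t0"
proof (rule ccontr)
  assume "\<not> x t0 \<le> x' t0"
  obtain \<phi>1 \<phi>2 where
    r1: "regulated x"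
    and e1: "\<forall>t\<ge>0. x t = y t + \<phi>1 t - \<phi>2 t"
    and k1: "\<forall>t\<ge>0. k t = \<phi>1 t - \<phi>2 t"
    and b1: "\<forall>t\<ge>0. l t \<le> x t \<and> x t \<le> u t"
    and m11: "mono_on {0..} \<phi>1"
    and m21: "mono_on {0..} \<phi>2"
    and z11: "\<phi>1 0 = 0"
    and z21: "\<phi>2 0 = 0"
    and L11: "LS_int (\<lambda>s. min (x s - l s) (rlim x s - rlim l s)) \<phi>1 = 0"
    and L21: "LS_int (\<lambda>s. min (u s - x s) (rlim u s - rlim x s)) \<phi>2 = 0"
    and rb1: "\<forall>s\<ge>0. rlim l s \<le> rlim x s \<and> rlim x s \<le> rlim u s"
    and J1: "\<forall>s\<ge>0. (rlim x s - rlim l s) * rjump \<phi>1 s = 0 \<and> (u s - x s) * rjump \<phi>1 s = 0 \<and> (rlim u s - rlim x s) * rjump \<phi>2 s = 0 \<and> (x s - l s) * rjump \<phi>2 s = 0"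
    and jr1: "\<forall>s\<ge>0. rlim x s - x s = (rlim y s - y s) + rjump \<phi>1 s - rjump \<phi>2 s"
    by (rule sol_facts[OF sol1 ry rl ru])
  obtain \<psi>1 \<psi>2 where
    r2: "regulated x'"
    and e2: "\<forall>t\<ge>0. x' t = y t + \<psi>1 t - \<psi>2 t"
    and k2: "\<forall>t\<ge>0. k' t = \<psi>1 t - \<psi>2 t"
    and b2: "\<forall>t\<ge>0. l t \<le> x' t \<and> x' t \<le> u t"
    and m12: "mono_on {0..} \<psi>1"
    and m22: "mono_on {0..} \<psi>2"
    and z12: "\<psi>1 0 = 0"
    and z22: "\<psi>2 0 = 0"
    and L12: "LS_int (\<lambda>s. min (x' s - l s) (rlim x' s - rlim l s)) \<psi>1 = 0"
    and L22: "LS_int (\<lambda>s. min (u s - x' s) (rlim u s - rlim x' s)) \<psi>2 = 0"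
    and rb2: "\<forall>s\<ge>0. rlim l s \<le> rlim x' s \<and> rlim x' s \<le> rlim u s"
    and J2: "\<forall>s\<ge>0. (rlim x' s - rlim l s) * rjump \<psi>1 s = 0 \<and> (u s - x' s) * rjump \<psi>1 s = 0 \<and> (rlim u s - rlim x' s) * rjump \<psi>2 s = 0 \<and> (x' s - l s) * rjump \<psi>2 s = 0"
    and jr2: "\<forall>s\<ge>0. rlim x' s - x' s = (rlim y s - y s) + rjump \<psi>1 s - rjump \<psi>2 s"
    by (rule sol_facts[OF sol2 ry rl ru])
  define d where "d t = x t - x' t" for t
  have dpos: "d t0 > 0" using \<open>\<not> x t0 \<le> x' t0\<close> by (simp add: d_def)
  have DINC: "d b - d a \<le> (\<phi>1 b - \<phi>1 a) + (\<psi>2 b - \<psi>2 a)" if ab: "0 \<le> a" "a \<le> b" for a b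
  proof -
    have "\<phi>2 a \<le> \<phi>2 b" "\<psi>1 a \<le> \<psi>1 b" using mono_onD[OF m21] mono_onD[OF m12] ab by auto
    thus ?thesis using e1 e2 ab by (simp add: d_def)
  qed
  have P: "rlim x s - rlim x' s \<ge> d s" if s: "s \<ge> 0" "d s > 0" for s
  proof -
    have "x s - l s > 0" "u s - x' s > 0" using s b1 b2 by (auto simp: d_def)
    hence "rjump \<phi>2 s = 0" "rjump \<psi>1 s = 0" using J1 J2 s by auto
    thus ?thesis using jr1[rule_format, OF s(1)] jr2[rule_format, OF s(1)] rjump_nonneg[OF m11 s(1)] rjump_nonneg[OF m22 s(1)]
      unfolding d_def by linarith
  qed
  have RL: "rlim x s - rlim x' s > 0" if "s \<ge> 0" "d s > 0" for s using P[OF that] that by simp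
  have G1: "min (x s - l s) (rlim x s - rlim l s) > 0" if "s \<ge> 0" "d s > 0" for s
    using RL[OF that] that b2 rb2 by (auto simp: d_def)
  have G2: "min (u s - x' s) (rlim u s - rlim x' s) > 0" if "s \<ge> 0" "d s > 0" for s
    using RL[OF that] that b1 rb1 by (auto simp: d_def)
  have Z: "rjump \<phi>1 s = 0 \<and> rjump \<psi>2 s = 0" if "s \<ge> 0" "rlim x s - rlim x' s > 0" for s
  proof -
    have "rlim x s - rlim l s > 0" "rlim u s - rlim x' s > 0" using that rb1 rb2 by auto
    thus ?thesis using J1 J2 that by auto
  qed
  have CONSTF: "rc_part \<phi>1 t0 = rc_part \<phi>1 a \<and> rc_part \<psi>2 t0 = rc_part \<psi>2 a"
    if a: "0 \<le> a" "a \<le> t0" "\<forall>s\<in>{a..t0}. d s > 0" for a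
  proof
    show "rc_part \<phi>1 t0 = rc_part \<phi>1 a"
      by (rule const_on[OF m11 z11 r1 rl L11 a(1,2)]) (use G1 a in auto)
    show "rc_part \<psi>2 t0 = rc_part \<psi>2 a"
      by (rule const_on[OF m22 z22 ru r2 L22 a(1,2)]) (use G2 a in auto)
  qed
  have FLAT: "\<phi>1 t0 = \<phi>1 a \<and> \<psi>2 t0 = \<psi>2 a"
    if a: "0 \<le> a" "a \<le> t0" "rc_part \<phi>1 t0 = rc_part \<phi>1 a" "rc_part \<psi>2 t0 = rc_part \<psi>2 a"
      "\<forall>s\<in>{a..<t0}. rlim x s - rlim x' s > 0" for a
  proof
    show "\<phi>1 t0 = \<phi>1 a" by (rule flat[OF m11 a(1,2,3)]) (use Z a in auto)
    show "\<psi>2 t0 = \<psi>2 a" by (rule flat[OF m22 a(1,2,4)]) (use Z a in auto)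
  qed
  define E where "E = {s\<in>{0..t0}. d s \<le> 0}"
  have d0: "d 0 = 0" using e1 e2 z11 z21 z12 z22 by (simp add: d_def)
  have E0: "0 \<in> E" using t0 d0 by (simp add: E_def)
  have Ebd: "bdd_above E" unfolding E_def by (rule bdd_aboveI[of _ t0]) auto
  have Ene: "E \<noteq> {}" using E0 by auto
  define \<sigma> where "\<sigma> = Sup E"
  have \<sigma>0: "0 \<le> \<sigma>" using cSup_upper[OF E0 Ebd] by (simp add: \<sigma>_def)
  have \<sigma>t: "\<sigma> \<le> t0" unfolding \<sigma>_def by (rule cSup_least[OF Ene]) (auto simp: E_def)
  have posE: "d s > 0" if s: "s \<in> {\<sigma><..t0}" for s
  proof (rule ccontr)
    assume "\<not> d s > 0"
    hence "s \<in> E" using s \<sigma>0 by (auto simp: E_def)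
    hence "s \<le> \<sigma>" unfolding \<sigma>_def by (rule cSup_upper[OF _ Ebd])
    thus False using s by simp
  qed
  show False
  proof (cases "\<sigma> \<in> E")
    case True
    hence d\<sigma>: "d \<sigma> \<le> 0" by (simp add: E_def)
    have \<sigma>t': "\<sigma> < t0" using \<sigma>t d\<sigma> dpos by (cases "\<sigma> = t0") auto
    have CF: "rc_part \<phi>1 t0 = rc_part \<phi>1 a \<and> rc_part \<psi>2 t0 = rc_part \<psi>2 a" if a: "a \<in> {\<sigma><..t0}" for a
      by (rule CONSTF) (use a \<sigma>0 posE in auto)
    have evt: "\<forall>\<^sub>F r in at_right \<sigma>. r \<in> {\<sigma><..t0}"
      unfolding eventually_at_right_field using \<sigma>t' by (intro exI[of _ t0]) auto
    have ev1: "\<forall>\<^sub>F r in at_right \<sigma>. rc_part \<phi>1 r = rc_part \<phi>1 t0"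
      using evt by (rule eventually_mono) (use CF in simp)
    have ev2: "\<forall>\<^sub>F r in at_right \<sigma>. rc_part \<psi>2 r = rc_part \<psi>2 t0"
      using evt by (rule eventually_mono) (use CF in simp)
    have F1: "rc_part \<phi>1 \<sigma> = rc_part \<phi>1 t0" by (rule rc_eq[OF F_rcont[OF m11 z11] ev1])
    have F2: "rc_part \<psi>2 \<sigma> = rc_part \<psi>2 t0" by (rule rc_eq[OF F_rcont[OF m22 z22] ev2])
    have ds: "d t0 \<le> d s" if s: "s \<in> {\<sigma><..t0}" for s
    proof -
      have rs: "\<forall>s'\<in>{s..<t0}. rlim x s' - rlim x' s' > 0"
      proof
        fix s' assume "s' \<in> {s..<t0}"
        hence s': "s' \<in> {\<sigma><..t0}" using s by auto
        show "rlim x s' - rlim x' s' > 0" by (rule RL) (use s' \<sigma>0 posE[OF s'] in auto)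
      qed
      have "\<phi>1 t0 = \<phi>1 s \<and> \<psi>2 t0 = \<psi>2 s"
        by (rule FLAT[OF _ _ conjunct1[OF CF[OF s]] conjunct2[OF CF[OF s]] rs]) (use s \<sigma>0 in auto)
      thus ?thesis using DINC[of s t0] s \<sigma>0 by auto
    qed
    have "d t0 \<le> rlim x \<sigma> - rlim x' \<sigma>"
    proof (rule tendsto_lowerbound)
      show "((\<lambda>r. x r - x' r) \<longlongrightarrow> rlim x \<sigma> - rlim x' \<sigma>) (at_right \<sigma>)"
        by (intro tendsto_intros reg_rlim r1 r2 \<sigma>0)
      show "\<forall>\<^sub>F r in at_right \<sigma>. d t0 \<le> x r - x' r"
        using evt by (rule eventually_mono) (use ds in \<open>auto simp: d_def\<close>)
    qed simp
    hence "rlim x \<sigma> - rlim x' \<sigma> > 0" using dpos by simp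
    hence rs: "\<forall>s'\<in>{\<sigma>..<t0}. rlim x s' - rlim x' s' > 0"
    proof (intro ballI)
      fix s' assume rr: "rlim x \<sigma> - rlim x' \<sigma> > 0" and s': "s' \<in> {\<sigma>..<t0}"
      show "rlim x s' - rlim x' s' > 0"
      proof (cases "s' = \<sigma>")
        case False
        hence s'': "s' \<in> {\<sigma><..t0}" using s' by auto
        show ?thesis by (rule RL) (use s'' \<sigma>0 posE[OF s''] in auto)
      qed (use rr in simp)
    qed
    have "\<phi>1 t0 = \<phi>1 \<sigma> \<and> \<psi>2 t0 = \<psi>2 \<sigma>"
      by (rule FLAT[OF \<sigma>0 \<sigma>t F1[symmetric] F2[symmetric] rs])
    thus False using DINC[OF \<sigma>0 \<sigma>t] d\<sigma> dpos by simp
  next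
    case False
    have d\<sigma>: "d \<sigma> > 0" using False \<sigma>0 \<sigma>t by (auto simp: E_def)
    have \<sigma>pos: "\<sigma> > 0" using False E0 \<sigma>0 by (cases "\<sigma> = 0") auto
    have posI: "\<forall>s\<in>{\<sigma>..t0}. d s > 0" using posE d\<sigma> by (auto simp: order_le_less)
    have CF: "rc_part \<phi>1 t0 = rc_part \<phi>1 \<sigma> \<and> rc_part \<psi>2 t0 = rc_part \<psi>2 \<sigma>"
      by (rule CONSTF[OF \<sigma>0 \<sigma>t posI])
    have FL: "\<phi>1 t0 = \<phi>1 \<sigma> \<and> \<psi>2 t0 = \<psi>2 \<sigma>"
      by (rule FLAT) (use \<sigma>0 \<sigma>t CF RL posI in auto)
    have pt1: "emeasure (interval_measure (rc_part \<phi>1)) {\<sigma>} = 0"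
      by (rule LS_zero_set[OF L11, of _ "min (x \<sigma> - l \<sigma>) (rlim x \<sigma> - rlim l \<sigma>)"])
         (use G1[OF \<sigma>0 d\<sigma>] \<sigma>0 in auto)
    have pt2: "emeasure (interval_measure (rc_part \<psi>2)) {\<sigma>} = 0"
      by (rule LS_zero_set[OF L22, of _ "min (u \<sigma> - x' \<sigma>) (rlim u \<sigma> - rlim x' \<sigma>)"])
         (use G2[OF \<sigma>0 d\<sigma>] \<sigma>0 in auto)
    have e: "d t0 / 2 > 0" using dpos by simp
    obtain r1 where r1: "0 \<le> r1" "r1 < \<sigma>" "\<forall>r'\<in>{r1..<\<sigma>}. \<phi>1 \<sigma> - \<phi>1 r' < d t0 / 2"
      using phi_left[OF m11 z11 \<sigma>pos pt1 e] by blast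
    obtain r2 where r2: "0 \<le> r2" "r2 < \<sigma>" "\<forall>r'\<in>{r2..<\<sigma>}. \<psi>2 \<sigma> - \<psi>2 r' < d t0 / 2"
      using phi_left[OF m22 z22 \<sigma>pos pt2 e] by blast
    have "max r1 r2 < Sup E" using r1 r2 by (simp add: \<sigma>_def)
    then obtain a where a: "a \<in> E" "max r1 r2 < a" using less_cSup_iff[OF Ene Ebd] by blast
    have "a \<le> \<sigma>" unfolding \<sigma>_def by (rule cSup_upper[OF a(1) Ebd])
    hence a\<sigma>: "a < \<sigma>" using a False by (cases "a = \<sigma>") auto
    have da: "d a \<le> 0" "0 \<le> a" using a by (auto simp: E_def)
    have "d t0 - d a \<le> (\<phi>1 \<sigma> - \<phi>1 a) + (\<psi>2 \<sigma> - \<psi>2 a)"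
      using DINC[of a t0] da a\<sigma> \<sigma>t FL by simp
    moreover have "\<phi>1 \<sigma> - \<phi>1 a < d t0 / 2" "\<psi>2 \<sigma> - \<psi>2 a < d t0 / 2"
      using r1(3) r2(3) a a\<sigma> by auto
    ultimately show False using da by linarith
  qed
qed

theorem theorem1:
  fixes y l u x k x' k' :: "real \<Rightarrow> real"
  assumes "regulated y" and "regulated l" and "regulated u"
    and "\<forall>t\<ge>0. l t \<le> u t"
    and "l 0 \<le> y 0" and "y 0 \<le> u 0"
    and "\<forall>t\<ge>0. (INF s\<in>{0..t}. u s - l s) > 0"
    and "RP_solution y l u x k"
    and "RP_solution y l u x' k'"
  shows "(\<forall>t\<ge>0. x t = x' t) \<and> (\<forall>t\<ge>0. k t = k' t)"
proof -
  have X: "\<forall>t\<ge>0. x t = x' t"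
  proof (intro allI impI antisym)
    fix t :: real assume t: "t \<ge> 0"
    show "x t \<le> x' t" by (rule one_side[OF assms(1,2,3,8,9) t])
    show "x' t \<le> x t" by (rule one_side[OF assms(1,2,3,9,8) t])
  qed
  have "\<forall>t\<ge>0. x t = y t + k t" using assms(8) unfolding RP_solution_def by blast
  moreover have "\<forall>t\<ge>0. x' t = y t + k' t" using assms(9) unfolding RP_solution_def by blast
  ultimately have "\<forall>t\<ge>0. k t = k' t" using X by force
  with X show ?thesis by blast
qed

end
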